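(* Let $M$ be a left Ehresmann monoid with semilattice of projections $E$ and let $T$ be a submonoid of $M$ with $M=\langle E\cup T\rangle_{(2)}$, such that $M$ has uniqueness of $T$-normal forms. Define a unary operation $*$ on $M$ as follows: if $a=t_0e_1t_1\cdots t_{n-1}e_nt_n$ is the $T$-normal form of $a$, put $a^*=e_n$ if $n\ge1$ and $t_n=1$, and $a^*=1$ otherwise. Then $M$, with $+$ and $*$, is a $*$-left Ehresmann monoid; in particular $a^*$ is the least right identity of $a$ in $E$.
   Context: A left Ehresmann monoid is a monoid $M$ with a unary operation $a\mapsto a^+$ satisfying $x^+x=x$, $(x^+y^+)^+=x^+y^+$, $x^+y^+=y^+x^+$, $(xy)^+=(xy^+)^+$; $E=\{a^+:a\in M\}$ is a semilattice (ordered by $e\le f$ iff $ef=e$). $\langle A\rangle_{(2)}$ is the subsemigroup generated by $A$. For a submonoid $T$ with $M=\langle E\cup T\rangle_{(2)}$, a $T$-normal form of $a\in M$ is an expression $a=t_0e_1t_1\cdots e_nt_n$ with $n\ge0$, $e_1,\dots,e_n\in E\setminus\{1\}$, $t_1,\dots,t_{n-1}\in T\setminus\{1\}$, $t_0,t_n\in T$ and $e_i<(t_ie_{i+1}\cdots e_nt_n)^+$ for $1\le i\le n$; $M$ has uniqueness of $T$-normal forms if each element has exactly one such expression (as a sequence). A $*$-left Ehresmann monoid is a monoid with two unary operations $+,*$ such that $(M,+)$ is left Ehresmann, $M$ satisfies $xx^*=x$, $(x^* )^*=x^*$, $x^*y^*=y^*x^*$, $(xy^* )^*y^*=(xy^*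 )^*$ (equivalently $\{a^*\}$ is a semilattice and $a^*$ is the least right identity of $a$ in it), and $(x^* )^+=x^*$, $(x^+)^*=x^+$. *)

theory Defs
  imports Main
begin

definition left_ehresmann :: "('a::monoid_mult \<Rightarrow> 'a) \<Rightarrow> bool" where
  "left_ehresmann pl \<longleftrightarrow>
     (\<forall>x. pl x * x = x) \<and>
     (\<forall>x y. pl (pl x * pl y) = pl x * pl y) \<and>
     (\<forall>x y. pl x * pl y = pl y * pl x) \<and>
     (\<forall>x y. pl (x * y) = pl (x * pl y))"

definition projs :: "('a::monoid_mult \<Rightarrow> 'a) \<Rightarrow> 'a set" where
  "projs pl = range pl"

definition sl_less :: "'a::monoid_mult \<Rightarrow> 'a \<Rightarrow> bool" where
  "sl_less e f \<longleftrightarrow> e * f = e \<and> e \<noteq> f"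

definition submonoid :: "'a::monoid_mult set \<Rightarrow> bool" where
  "submonoid T \<longleftrightarrow> 1 \<in> T \<and> (\<forall>x\<in>T. \<forall>y\<in>T. x * y \<in> T)"

inductive_set gen2 :: "'a::monoid_mult set \<Rightarrow> 'a set" for A where
  base: "x \<in> A \<Longrightarrow> x \<in> gen2 A"
| mult: "x \<in> gen2 A \<Longrightarrow> y \<in> gen2 A \<Longrightarrow> x * y \<in> gen2 A"

text \<open>A T-normal form t0 e1 t1 ... en tn is represented as (t0, [(e1,t1),...,(en,tn)]).
  eval_tail [(e1,t1),...,(en,tn)] = e1 t1 ... en tn.\<close>
fun eval_tail :: "('a::monoid_mult \<times> 'a) list \<Rightarrow> 'a" where
  "eval_tail [] = 1"
| "eval_tail ((e, t) # rest) = e * t * eval_tail rest"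

definition eval_nf :: "'a::monoid_mult \<times> ('a \<times> 'a) list \<Rightarrow> 'a" where
  "eval_nf nf = fst nf * eval_tail (snd nf)"

fun nf_tail_ok :: "('a::monoid_mult \<Rightarrow> 'a) \<Rightarrow> 'a set \<Rightarrow> ('a \<times> 'a) list \<Rightarrow> bool" where
  "nf_tail_ok pl T [] = True"
| "nf_tail_ok pl T ((e, t) # rest) =
     (e \<in> projs pl - {1} \<and> t \<in> T \<and> (rest \<noteq> [] \<longrightarrow> t \<noteq> 1) \<and>
      sl_less e (pl (t * eval_tail rest)) \<and> nf_tail_ok pl T rest)"

definition is_T_nf :: "('a::monoid_mult \<Rightarrow> 'a) \<Rightarrow> 'a set \<Rightarrow> 'a \<times> ('a \<times> 'a) list \<Rightarrow> 'a \<Rightarrow> bool" where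
  "is_T_nf pl T nf a \<longleftrightarrow> fst nf \<in> T \<and> nf_tail_ok pl T (snd nf) \<and> eval_nf nf = a"

definition unique_T_nf :: "('a::monoid_mult \<Rightarrow> 'a) \<Rightarrow> 'a set \<Rightarrow> bool" where
  "unique_T_nf pl T \<longleftrightarrow> (\<forall>a. \<exists>!nf. is_T_nf pl T nf a)"

definition nf_star :: "('a::monoid_mult \<Rightarrow> 'a) \<Rightarrow> 'a set \<Rightarrow> 'a \<Rightarrow> 'a" where
  "nf_star pl T a =
     (let nf = (THE nf. is_T_nf pl T nf a)
      in if snd nf \<noteq> [] \<and> snd (last (snd nf)) = 1 then fst (last (snd nf)) else 1)"

definition star_left_ehresmann :: "('a::monoid_mult \<Rightarrow> 'a) \<Rightarrow> ('a \<Rightarrow> 'a) \<Rightarrow> bool" where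
  "star_left_ehresmann pl st \<longleftrightarrow>
     left_ehresmann pl \<and>
     (\<forall>x. x * st x = x) \<and>
     (\<forall>x. st (st x) = st x) \<and>
     (\<forall>x y. st x * st y = st y * st x) \<and>
     (\<forall>x y. st (x * st y) * st y = st (x * st y)) \<and>
     (\<forall>x. pl (st x) = st x) \<and>
     (\<forall>x. st (pl x) = pl x)"

end

theory Submission
  imports Defs
begin

lemma le_basic:
  assumes "left_ehresmann pl"
  shows "pl 1 = 1" and "pl (pl x) = pl x" and "pl x * pl x = pl x"
    and "pl x * pl y = pl y * pl x" and "pl x * pl y \<in> projs pl" and "pl x * x = x"
proof -
  have A: "\<And>x. pl x * x = x" and B: "\<And>x y. pl (pl x * pl y) = pl x * pl y"
    and C: "\<And>x y. pl x * pl y = pl y * pl x"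
    using assms unfolding left_ehresmann_def by blast+
  show p1: "pl 1 = 1" using A[of 1] by simp
  show pp: "pl (pl x) = pl x" using B[of x 1] p1 by simp
  show "pl x * pl x = pl x" using A[of "pl x"] pp by simp
  show "pl x * pl y = pl y * pl x" by (rule C)
  show "pl x * pl y \<in> projs pl" unfolding projs_def using B[of x y] by (metis rangeI)
  show "pl x * x = x" by (rule A)
qed

lemma E_pl: "left_ehresmann pl \<Longrightarrow> e \<in> projs pl \<Longrightarrow> pl e = e"
  unfolding projs_def using le_basic(2) by (metis imageE)
lemma E_idem: "left_ehresmann pl \<Longrightarrow> e \<in> projs pl \<Longrightarrow> e * e = e"
  unfolding projs_def using le_basic(3) by (metis imageE)
lemma E_comm: "left_ehresmann pl \<Longrightarrow> e \<in> projs pl \<Longrightarrow> f \<in> projs pl \<Longrightarrow> e * f = f * e"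
proof -
  assume le: "left_ehresmann pl" and "e \<in> projs pl" "f \<in> projs pl"
  then obtain u v where "e = pl u" "f = pl v" unfolding projs_def by blast
  then show ?thesis using le_basic(4)[OF le] by simp
qed
lemma E_mult: "left_ehresmann pl \<Longrightarrow> e \<in> projs pl \<Longrightarrow> f \<in> projs pl \<Longrightarrow> e * f \<in> projs pl"
proof -
  assume le: "left_ehresmann pl" and "e \<in> projs pl" "f \<in> projs pl"
  then obtain u v where "e = pl u" "f = pl v" unfolding projs_def by blast
  then show ?thesis using le_basic(5)[OF le] by simp
qed
lemma E_pl_in: "pl x \<in> projs pl"
  unfolding projs_def by simp
lemma E_one: "left_ehresmann pl \<Longrightarrow> 1 \<in> projs pl"
  unfolding projs_def using le_basic(1) by (metis rangeI)

lemma eval_tail_append: "eval_tail (xs @ ys) = eval_tail xs * eval_tail ys"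
  by (induction xs rule: eval_tail.induct) (auto simp: mult.assoc)

lemma nf_tail_ok_mem: "nf_tail_ok pl T L \<Longrightarrow> (e, t) \<in> set L \<Longrightarrow> e \<in> projs pl \<and> t \<in> T"
proof (induction L)
  case Nil then show ?case by simp
next
  case (Cons p L) then show ?case by (cases p) auto
qed

lemma step_T:
  assumes "submonoid T" "t \<in> T" "is_T_nf pl T nf x"
  shows "is_T_nf pl T (t * fst nf, snd nf) (t * x)"
  using assms unfolding is_T_nf_def submonoid_def eval_nf_def by (auto simp: mult.assoc)

lemma step_E:
  assumes le: "left_ehresmann pl" and h: "h \<in> projs pl" and e: "e \<in> projs pl"
    and nf: "is_T_nf pl T nf x" and ne: "snd nf \<noteq> []"
    and lst: "last (snd nf) = (f, 1)" and fe: "f * e = f" and one: "1 \<in> T"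
  shows "\<exists>nf'. is_T_nf pl T nf' (h * x) \<and> snd nf' \<noteq> [] \<and>
           (\<exists>f'. last (snd nf') = (f', 1) \<and> f' * e = f')"
proof -
  obtain t0 L where nfd: "nf = (t0, L)" by (cases nf)
  have t0T: "t0 \<in> T" and ok: "nf_tail_ok pl T L" and xe: "x = t0 * eval_tail L"
    using nf nfd unfolding is_T_nf_def eval_nf_def by auto
  have LN: "L \<noteq> []" using ne nfd by simp
  show ?thesis
  proof (cases "t0 = 1")
    case False
    define p where "p = pl (t0 * eval_tail L)"
    have pE: "p \<in> projs pl" unfolding p_def by (rule E_pl_in)
    define h' where "h' = h * p"
    have h'E: "h' \<in> projs pl" unfolding h'_def using E_mult[OF le h pE] .
    have px: "p * x = x" unfolding p_def xe using le_basic(6)[OF le] .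
    have hx: "h * x = h' * x" unfolding h'_def using px by (simp add: mult.assoc)
    show ?thesis
    proof (cases "h' = p")
      case True
      then have "h * x = x" using hx px by simp
      then show ?thesis using nf ne lst fe by metis
    next
      case hne: False
      have h'p: "h' * p = h'" unfolding h'_def using E_idem[OF le pE] by (simp add: mult.assoc)
      have h'1: "h' \<noteq> 1"
      proof
        assume "h' = 1"
        then have "p * h' = p" by simp
        then have "h' = p" using h'p E_comm[OF le h'E pE] \<open>h' = 1\<close> by simp
        then show False using hne by simp
      qed
      have ok': "nf_tail_ok pl T ((h', t0) # L)"
        using h'E h'1 t0T False h'p hne ok unfolding p_def by (auto simp: sl_less_def)
      have "is_T_nf pl T (1, (h', t0) # L) (h * x)"
        unfolding is_T_nf_def eval_nf_def using ok' hx xe E_one[OF le] one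
        by (auto simp: mult.assoc)
      moreover have "last (snd (1::'a, (h', t0) # L)) = (f, 1)" using LN lst nfd by simp
      ultimately show ?thesis using fe by (metis list.distinct(1) snd_conv)
    qed
  next
    case True
    obtain e1 t1 rest where Ld: "L = (e1, t1) # rest" using LN by (metis list.exhaust prod.exhaust)
    define p where "p = pl (t1 * eval_tail rest)"
    have e1E: "e1 \<in> projs pl" and e11: "e1 \<noteq> 1" and t1T: "t1 \<in> T"
      and rt: "rest \<noteq> [] \<longrightarrow> t1 \<noteq> 1" and sl: "sl_less e1 p" and okr: "nf_tail_ok pl T rest"
      using ok Ld unfolding p_def by auto
    have pE: "p \<in> projs pl" unfolding p_def by (rule E_pl_in)
    have e1p: "e1 * p = e1" and e1np: "e1 \<noteq> p" using sl unfolding sl_less_def by auto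
    have hE: "h * e1 \<in> projs pl" using E_mult[OF le h e1E] .
    have he1: "h * e1 \<noteq> 1"
    proof
      assume a: "h * e1 = 1"
      have "e1 = e1 * (h * e1)" using a by simp
      also have "\<dots> = h * e1" by (metis E_comm[OF le h e1E] E_idem[OF le e1E] mult.assoc)
      finally show False using a e11 by simp
    qed
    have s1: "h * e1 * p = h * e1" using e1p by (simp add: mult.assoc)
    have s2: "h * e1 \<noteq> p"
    proof
      assume a: "h * e1 = p"
      have "e1 = e1 * p" using e1p by simp
      also have "\<dots> = e1 * (h * e1)" using a by simp
      also have "\<dots> = h * e1" by (metis E_comm[OF le h e1E] E_idem[OF le e1E] mult.assoc)
      finally show False using a e1np by simp
    qed
    have ok': "nf_tail_ok pl T ((h * e1, t1) # rest)"
      using hE he1 t1T rt s1 s2 okr unfolding p_def by (auto simp: sl_less_def)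
    have nf': "is_T_nf pl T (1, (h * e1, t1) # rest) (h * x)"
      unfolding is_T_nf_def eval_nf_def using ok' xe Ld True E_one[OF le] one
      by (auto simp: mult.assoc)
    show ?thesis
    proof (cases "rest = []")
      case True
      then have "t1 = 1" "f = e1" using lst nfd Ld by auto
      then have "last (snd (1::'a, (h * e1, t1) # rest)) = (h * e1, 1)" "h * e1 * e = h * e1"
        using True fe by (auto simp: mult.assoc)
      then show ?thesis using nf' by (metis list.distinct(1) snd_conv)
    next
      case False
      then have "last (snd (1::'a, (h * e1, t1) # rest)) = (f, 1)" using lst nfd Ld by simp
      then show ?thesis using nf' fe by (metis list.distinct(1) snd_conv)
    qed
  qed
qed

definition Qp where
  "Qp pl T z \<longleftrightarrow> (\<forall>e\<in>projs pl - {1}. \<exists>nf. is_T_nf pl T nf (z * e) \<and> snd nf \<noteq> [] \<and>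
       (\<exists>f. last (snd nf) = (f, 1) \<and> f * e = f))"

lemma Qp_one:
  assumes le: "left_ehresmann pl" and sm: "submonoid T"
  shows "Qp pl T 1"
  unfolding Qp_def
proof
  fix e assume e: "e \<in> projs pl - {1}"
  have "is_T_nf pl T (1, [(e, 1)]) (1 * e)"
    using e sm E_pl[OF le] unfolding is_T_nf_def submonoid_def eval_nf_def
    by (auto simp: le_basic(1)[OF le] sl_less_def)
  moreover have "e * e = e" using e E_idem[OF le] by blast
  ultimately show "\<exists>nf. is_T_nf pl T nf (1 * e) \<and> snd nf \<noteq> [] \<and>
       (\<exists>f. last (snd nf) = (f, 1) \<and> f * e = f)" by (metis last.simps list.distinct(1) snd_conv)
qed

lemma Qp_gen:
  assumes le: "left_ehresmann pl" and sm: "submonoid T"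
  shows "z \<in> gen2 (projs pl \<union> T) \<Longrightarrow> Qp pl T w \<Longrightarrow> Qp pl T (z * w)"
proof (induction arbitrary: w rule: gen2.induct)
  case (base x)
  show ?case unfolding Qp_def
  proof
    fix e assume e: "e \<in> projs pl - {1}"
    obtain nf f where nf: "is_T_nf pl T nf (w * e)" "snd nf \<noteq> []" "last (snd nf) = (f, 1)" "f * e = f"
      using base(2) e unfolding Qp_def by blast
    show "\<exists>nf. is_T_nf pl T nf (x * w * e) \<and> snd nf \<noteq> [] \<and>
       (\<exists>f. last (snd nf) = (f, 1) \<and> f * e = f)"
    proof (cases "x \<in> T")
      case True
      from step_T[OF sm True nf(1)] nf show ?thesis by (auto simp: mult.assoc)
    next
      case False
      then have "x \<in> projs pl" using base(1) by blast
      from step_E[OF le this _ nf(1) nf(2) nf(3) nf(4)] e sm show ?thesis by (simp add: mult.assoc submonoid_def)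
    qed
  qed
next
  case (mult x y)
  then show ?case by (simp add: mult.assoc)
qed

lemma Qp_all:
  assumes le: "left_ehresmann pl" and sm: "submonoid T" and g: "gen2 (projs pl \<union> T) = UNIV"
  shows "Qp pl T z"
  using Qp_gen[OF le sm, of z 1] Qp_one[OF le sm] g by simp

lemma the_nf:
  assumes "unique_T_nf pl T" "is_T_nf pl T nf a"
  shows "(THE nf. is_T_nf pl T nf a) = nf"
  using assms unfolding unique_T_nf_def by (metis the1_equality)

lemma star_E:
  assumes le: "left_ehresmann pl" and sm: "submonoid T" and u: "unique_T_nf pl T"
    and e: "e \<in> projs pl"
  shows "nf_star pl T e = e"
proof (cases "e = 1")
  case True
  have "is_T_nf pl T (1, []) e" using True sm unfolding is_T_nf_def submonoid_def eval_nf_def by simp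
  then show ?thesis using the_nf[OF u] True unfolding nf_star_def by simp
next
  case False
  have "is_T_nf pl T (1, [(e, 1)]) e"
    using e False sm E_pl[OF le] unfolding is_T_nf_def submonoid_def eval_nf_def
    by (auto simp: le_basic(1)[OF le] sl_less_def)
  then show ?thesis using the_nf[OF u] unfolding nf_star_def by simp
qed

lemma star_props:
  assumes le: "left_ehresmann pl" and sm: "submonoid T" and u: "unique_T_nf pl T"
  shows "nf_star pl T a \<in> projs pl \<and> a * nf_star pl T a = a"
proof -
  define nf where "nf = (THE nf. is_T_nf pl T nf a)"
  have nf: "is_T_nf pl T nf a" unfolding nf_def using u unfolding unique_T_nf_def by (metis theI')
  show ?thesis
  proof (cases "snd nf \<noteq> [] \<and> snd (last (snd nf)) = 1")
    case True
    obtain f where lf: "last (snd nf) = (f, 1)" using True by (metis prod.collapse)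
    have st: "nf_star pl T a = f" using True lf unfolding nf_star_def nf_def[symmetric] by simp
    have "(f, 1) \<in> set (snd nf)" using True lf by (metis last_in_set)
    then have fE: "f \<in> projs pl" using nf nf_tail_ok_mem unfolding is_T_nf_def by blast
    have "snd nf = butlast (snd nf) @ [(f, 1)]" using True lf by (metis append_butlast_last_id)
    then have ev: "eval_tail (snd nf) = eval_tail (butlast (snd nf)) * f"
      by (metis eval_tail.simps eval_tail_append mult_1_right)
    have "a = fst nf * eval_tail (snd nf)" using nf unfolding is_T_nf_def eval_nf_def by simp
    then have "a * f = a" using ev E_idem[OF le fE] by (simp add: mult.assoc)
    then show ?thesis using st fE by simp
  next
    case False
    then have "nf_star pl T a = 1" unfolding nf_star_def nf_def[symmetric] by auto
    then show ?thesis using E_one[OF le] by simp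
  qed
qed

lemma star_least:
  assumes le: "left_ehresmann pl" and sm: "submonoid T" and g: "gen2 (projs pl \<union> T) = UNIV"
    and u: "unique_T_nf pl T" and e: "e \<in> projs pl" and ae: "a * e = a"
  shows "nf_star pl T a * e = nf_star pl T a"
proof (cases "e = 1")
  case True then show ?thesis by simp
next
  case False
  obtain nf f where nf: "is_T_nf pl T nf (a * e)" "snd nf \<noteq> []" "last (snd nf) = (f, 1)" "f * e = f"
    using Qp_all[OF le sm g, of a] e False unfolding Qp_def by blast
  have "(THE nf. is_T_nf pl T nf a) = nf" using the_nf[OF u] nf(1) ae by simp
  then have "nf_star pl T a = f" using nf unfolding nf_star_def by simp
  then show ?thesis using nf(4) by simp
qed

theorem mainTheorem2:
  fixes pl :: "'a::monoid_mult \<Rightarrow> 'a" and T :: "'a set"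
  assumes "left_ehresmann pl"
    and "submonoid T"
    and "gen2 (projs pl \<union> T) = UNIV"
    and "unique_T_nf pl T"
  shows "star_left_ehresmann pl (nf_star pl T) \<and>
         (\<forall>a. nf_star pl T a \<in> projs pl \<and> a * nf_star pl T a = a \<and>
              (\<forall>e\<in>projs pl. a * e = a \<longrightarrow> nf_star pl T a * e = nf_star pl T a))"
proof -
  note le = assms(1) and sm = assms(2) and g = assms(3) and u = assms(4)
  have P: "\<And>a. nf_star pl T a \<in> projs pl \<and> a * nf_star pl T a = a" using star_props[OF le sm u] by blast
  have L: "\<And>a e. e \<in> projs pl \<Longrightarrow> a * e = a \<Longrightarrow> nf_star pl T a * e = nf_star pl T a"
    using star_least[OF le sm g u] by blast
  have S: "\<And>e. e \<in> projs pl \<Longrightarrow> nf_star pl T e = e" using star_E[OF le sm u] by blast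
  have "star_left_ehresmann pl (nf_star pl T)"
    unfolding star_left_ehresmann_def
  proof (intro conjI allI)
    show "left_ehresmann pl" by (rule le)
    fix x show "x * nf_star pl T x = x" using P by blast
  next
    fix x show "nf_star pl T (nf_star pl T x) = nf_star pl T x" using P S by blast
  next
    fix x y show "nf_star pl T x * nf_star pl T y = nf_star pl T y * nf_star pl T x"
      using P E_comm[OF le] by blast
  next
    fix x y
    have yE: "nf_star pl T y \<in> projs pl" using P by blast
    have "x * nf_star pl T y * nf_star pl T y = x * nf_star pl T y"
      using E_idem[OF le yE] by (simp add: mult.assoc)
    then show "nf_star pl T (x * nf_star pl T y) * nf_star pl T y = nf_star pl T (x * nf_star pl T y)"
      using L[OF yE] by blast
  next
    fix x show "pl (nf_star pl T x) = nf_star pl T x" using P E_pl[OF le] by blast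
  next
    fix x show "nf_star pl T (pl x) = pl x" using S E_pl_in by blast
  qed
  then show ?thesis using P L by blast
qed

end
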